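(* Let $n\geq4$ and let $U$ be a monomial. Then $x_{n-1}^2U\in G(J(P_n)^2)$ if and only if $U\in G(J(P_{n-2})^2)$.
   Context: For $m\geq1$, $P_m$ is the path graph on vertices $x_1,\ldots,x_m$ with edges $\{x_i,x_{i+1}\}$; $J(P_m)$ is its cover ideal in a polynomial ring over a field, generated by the monomials $\prod_{x\in C}x$ with $C$ a minimal vertex cover of $P_m$; $G(I)$ denotes the set of minimal monomial generators of a monomial ideal $I$. *)

theory Defs
  imports Main
begin

text \<open>Monomials in the variables x_1, x_2, ... are represented by their exponent
vectors: a monomial U is a function nat => nat, U i being the exponent of x_i.  A monomial ideal is represented by the set of monomials
it contains.\<close>

type_synonym monomial = "nat \<Rightarrow> nat"

definition mdvd :: "monomial \<Rightarrow> monomial \<Rightarrow> bool" where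
  "mdvd u v \<longleftrightarrow> (\<forall>i. u i \<le> v i)"

definition mmult :: "monomial \<Rightarrow> monomial \<Rightarrow> monomial" where
  "mmult u v = (\<lambda>i. u i + v i)"

definition xpow :: "nat \<Rightarrow> nat \<Rightarrow> monomial" where
  "xpow i k = (\<lambda>j. if j = i then k else 0)"

definition mon_of_set :: "nat set \<Rightarrow> monomial" where
  "mon_of_set C = (\<lambda>i. if i \<in> C then 1 else 0)"

definition mideal :: "monomial set \<Rightarrow> monomial set" where
  "mideal S = {w. \<exists>s\<in>S. mdvd s w}"

definition mideal_prod :: "monomial set \<Rightarrow> monomial set \<Rightarrow> monomial set" where
  "mideal_prod I J = mideal {mmult u v | u v. u \<in> I \<and> v \<in> J}"

definition min_gens :: "monomial set \<Rightarrow> monomial set" where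
  "min_gens I = {w \<in> I. \<forall>w'\<in>I. mdvd w' w \<longrightarrow> w' = w}"

definition path_edges :: "nat \<Rightarrow> nat set set" where
  "path_edges m = {{i, Suc i} | i. 1 \<le> i \<and> Suc i \<le> m}"

definition is_vertex_cover :: "nat \<Rightarrow> nat set \<Rightarrow> bool" where
  "is_vertex_cover m C \<longleftrightarrow> C \<subseteq> {1..m} \<and> (\<forall>e\<in>path_edges m. e \<inter> C \<noteq> {})"

definition is_min_vertex_cover :: "nat \<Rightarrow> nat set \<Rightarrow> bool" where
  "is_min_vertex_cover m C \<longleftrightarrow> is_vertex_cover m C \<and> (\<forall>D. D \<subset> C \<longrightarrow> \<not> is_vertex_cover m D)"

definition cover_ideal :: "nat \<Rightarrow> monomial set" where
  "cover_ideal m = mideal (mon_of_set ` {C. is_min_vertex_cover m C})"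

end

theory Submission
  imports Defs
begin

lemma mdvd_trans: "mdvd a b \<Longrightarrow> mdvd b c \<Longrightarrow> mdvd a c"
  unfolding mdvd_def using le_trans by blast

lemma mdvd_antisym: "mdvd a b \<Longrightarrow> mdvd b a \<Longrightarrow> a = b"
  unfolding mdvd_def by (simp add: fun_eq_iff le_antisym)

lemma mdvd_refl: "mdvd a a" unfolding mdvd_def by simp

lemma sub_mideal: "S \<subseteq> mideal S" unfolding mideal_def using mdvd_refl by blast

lemma mideal_prod_mideal:
  "mideal_prod (mideal S) (mideal S) = mideal {mmult a b | a b. a \<in> S \<and> b \<in> S}"
proof
  show "mideal_prod (mideal S) (mideal S) \<subseteq> mideal {mmult a b | a b. a \<in> S \<and> b \<in> S}"
  proof
    fix w assume "w \<in> mideal_prod (mideal S) (mideal S)"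
    then obtain s where "s \<in> {mmult u v | u v. u \<in> mideal S \<and> v \<in> mideal S}" "mdvd s w"
      unfolding mideal_prod_def mideal_def by blast
    then obtain u v where uv: "u \<in> mideal S" "v \<in> mideal S" "mdvd (mmult u v) w"
      by blast
    obtain a where "a \<in> S" "mdvd a u" using uv(1) unfolding mideal_def by blast
    obtain b where "b \<in> S" "mdvd b v" using uv(2) unfolding mideal_def by blast
    have "mdvd (mmult a b) w" using uv(3) \<open>mdvd a u\<close> \<open>mdvd b v\<close> unfolding mdvd_def mmult_def
      by (meson add_le_mono le_trans)
    moreover have "mmult a b \<in> {mmult a b | a b. a \<in> S \<and> b \<in> S}" using \<open>a \<in> S\<close> \<open>b \<in> S\<close> by blast
    ultimately show "w \<in> mideal {mmult a b | a b. a \<in> S \<and> b \<in> S}"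
      unfolding mideal_def by blast
  qed
next
  show "mideal {mmult a b | a b. a \<in> S \<and> b \<in> S} \<subseteq> mideal_prod (mideal S) (mideal S)"
  proof
    fix w assume "w \<in> mideal {mmult a b | a b. a \<in> S \<and> b \<in> S}"
    then obtain s where "s \<in> {mmult a b | a b. a \<in> S \<and> b \<in> S}" "mdvd s w"
      unfolding mideal_def by blast
    then obtain a b where ab: "a \<in> S" "b \<in> S" "mdvd (mmult a b) w" by blast
    have "a \<in> mideal S" "b \<in> mideal S" using ab sub_mideal by blast+
    then have "mmult a b \<in> {mmult u v | u v. u \<in> mideal S \<and> v \<in> mideal S}" by blast
    then show "w \<in> mideal_prod (mideal S) (mideal S)"
      unfolding mideal_prod_def mideal_def using ab(3) by blast
  qed
qed

lemma min_gens_mideal: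
  "min_gens (mideal P) = {w \<in> P. \<forall>p\<in>P. mdvd p w \<longrightarrow> p = w}"
proof
  show "min_gens (mideal P) \<subseteq> {w \<in> P. \<forall>p\<in>P. mdvd p w \<longrightarrow> p = w}"
  proof
    fix w assume w: "w \<in> min_gens (mideal P)"
    then have wI: "w \<in> mideal P" and wm: "\<forall>w'\<in>mideal P. mdvd w' w \<longrightarrow> w' = w"
      unfolding min_gens_def by auto
    obtain s where "s \<in> P" "mdvd s w" using wI unfolding mideal_def by blast
    then have "s = w" using wm sub_mideal by blast
    then have "w \<in> P" using \<open>s \<in> P\<close> by simp
    moreover have "\<forall>p\<in>P. mdvd p w \<longrightarrow> p = w" using wm sub_mideal by blast
    ultimately show "w \<in> {w \<in> P. \<forall>p\<in>P. mdvd p w \<longrightarrow> p = w}" by simp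
  qed
next
  show "{w \<in> P. \<forall>p\<in>P. mdvd p w \<longrightarrow> p = w} \<subseteq> min_gens (mideal P)"
  proof
    fix w assume w: "w \<in> {w \<in> P. \<forall>p\<in>P. mdvd p w \<longrightarrow> p = w}"
    have "\<forall>w'\<in>mideal P. mdvd w' w \<longrightarrow> w' = w"
    proof (intro ballI impI)
      fix w' assume "w' \<in> mideal P" "mdvd w' w"
      then obtain s where "s \<in> P" "mdvd s w'" unfolding mideal_def by blast
      then have "s = w" using w \<open>mdvd w' w\<close> mdvd_trans by blast
      then show "w' = w" using \<open>mdvd s w'\<close> \<open>mdvd w' w\<close> mdvd_antisym by blast
    qed
    moreover have "w \<in> mideal P" using w sub_mideal by blast
    ultimately show "w \<in> min_gens (mideal P)" unfolding min_gens_def by blast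
  qed
qed

definition Pr :: "nat \<Rightarrow> monomial set" where
  "Pr m = {mmult (mon_of_set C1) (mon_of_set C2) | C1 C2.
      is_min_vertex_cover m C1 \<and> is_min_vertex_cover m C2}"

lemma min_gens_sq:
  "min_gens (mideal_prod (cover_ideal m) (cover_ideal m)) = {w \<in> Pr m. \<forall>p\<in>Pr m. mdvd p w \<longrightarrow> p = w}"
proof -
  have "{mmult a b | a b. a \<in> mon_of_set ` {C. is_min_vertex_cover m C} \<and>
          b \<in> mon_of_set ` {C. is_min_vertex_cover m C}} = Pr m"
    unfolding Pr_def by blast
  then show ?thesis unfolding cover_ideal_def mideal_prod_mideal min_gens_mideal by simp
qed

lemma path_edges_iff: "e \<in> path_edges n \<longleftrightarrow> (\<exists>i. e = {i, Suc i} \<and> 1 \<le> i \<and> Suc i \<le> n)"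
  unfolding path_edges_def by simp

lemma mvc_cov: "is_min_vertex_cover m C \<Longrightarrow> is_vertex_cover m C"
  unfolding is_min_vertex_cover_def by simp

lemma mvc_min: "is_min_vertex_cover m C \<Longrightarrow> D \<subset> C \<Longrightarrow> \<not> is_vertex_cover m D"
  unfolding is_min_vertex_cover_def by simp

lemma vc_sub: "is_vertex_cover m C \<Longrightarrow> C \<subseteq> {1..m}"
  unfolding is_vertex_cover_def by simp

lemma vc_edge: "is_vertex_cover m C \<Longrightarrow> e \<in> path_edges m \<Longrightarrow> e \<inter> C \<noteq> {}"
  unfolding is_vertex_cover_def by simp

lemma L1:
  assumes "is_min_vertex_cover (Suc (Suc m)) C" "Suc (Suc m) \<notin> C"
  shows "Suc m \<in> C"
proof -
  have "{Suc m, Suc (Suc m)} \<in> path_edges (Suc (Suc m))" unfolding path_edges_iff by auto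
  then have "{Suc m, Suc (Suc m)} \<inter> C \<noteq> {}" using vc_edge mvc_cov assms(1) by blast
  then show ?thesis using assms(2) by auto
qed
lemma L2:
  assumes "is_min_vertex_cover (Suc (Suc m)) C" "Suc m \<in> C"
  shows "Suc (Suc m) \<notin> C"
proof
  assume a: "Suc (Suc m) \<in> C"
  let ?D = "C - {Suc (Suc m)}"
  have ps: "?D \<subset> C" using a by blast
  have cC: "is_vertex_cover (Suc (Suc m)) C" using assms(1) by (rule mvc_cov)
  have "is_vertex_cover (Suc (Suc m)) ?D"
    unfolding is_vertex_cover_def
  proof
    show "?D \<subseteq> {1..Suc (Suc m)}" using vc_sub[OF cC] by blast
    show "\<forall>e\<in>path_edges (Suc (Suc m)). e \<inter> ?D \<noteq> {}"
    proof
      fix e assume e: "e \<in> path_edges (Suc (Suc m))"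
      then obtain i where i: "e = {i, Suc i}" "1 \<le> i" "Suc i \<le> Suc (Suc m)" unfolding path_edges_iff by blast
      have eC: "e \<inter> C \<noteq> {}" using vc_edge[OF cC e] .
      show "e \<inter> ?D \<noteq> {}"
      proof (cases "i = Suc m")
        case True then show ?thesis using i assms(2) by auto
      next
        case False then have "Suc (Suc m) \<notin> e" using i by auto
        then show ?thesis using eC by blast
      qed
    qed
  qed
  then show False using mvc_min[OF assms(1) ps] by simp
qed

lemma L5:
  assumes "is_vertex_cover m D"
  shows "is_vertex_cover (Suc (Suc m)) (insert (Suc m) D)"
  unfolding is_vertex_cover_def
proof
  show "insert (Suc m) D \<subseteq> {1..Suc (Suc m)}" using vc_sub[OF assms] by auto
  show "\<forall>e\<in>path_edges (Suc (Suc m)). e \<inter> insert (Suc m) D \<noteq> {}"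
  proof
    fix e assume e: "e \<in> path_edges (Suc (Suc m))"
    then obtain i where i: "e = {i, Suc i}" "1 \<le> i" "Suc i \<le> Suc (Suc m)" unfolding path_edges_iff by blast
    show "e \<inter> insert (Suc m) D \<noteq> {}"
    proof (cases "Suc i \<le> m")
      case True
      then have "e \<in> path_edges m" using i unfolding path_edges_iff by blast
      then show ?thesis using vc_edge[OF assms] by blast
    next
      case False
      then have "i = m \<or> i = Suc m" using i by auto
      then show ?thesis using i by auto
    qed
  qed
qed

lemma L3:
  assumes "is_min_vertex_cover (Suc (Suc m)) C" "Suc m \<in> C"
  shows "is_min_vertex_cover m (C - {Suc m})"
proof -
  have nC: "Suc (Suc m) \<notin> C" using L2 assms by blast
  have cC: "is_vertex_cover (Suc (Suc m)) C" using assms(1) by (rule mvc_cov)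
  have Csub: "C \<subseteq> {1..Suc (Suc m)}" using vc_sub[OF cC] .
  have cov: "is_vertex_cover m (C - {Suc m})"
    unfolding is_vertex_cover_def
  proof
    show "C - {Suc m} \<subseteq> {1..m}"
    proof
      fix x assume x: "x \<in> C - {Suc m}"
      then have "x \<in> {1..Suc (Suc m)}" "x \<noteq> Suc m" "x \<noteq> Suc (Suc m)" using Csub nC by auto
      then show "x \<in> {1..m}" by auto
    qed
    show "\<forall>e\<in>path_edges m. e \<inter> (C - {Suc m}) \<noteq> {}"
    proof
      fix e assume e: "e \<in> path_edges m"
      then obtain i where i: "e = {i, Suc i}" "1 \<le> i" "Suc i \<le> m" unfolding path_edges_iff by blast
      then have "e \<in> path_edges (Suc (Suc m))" unfolding path_edges_iff by auto
      then have "e \<inter> C \<noteq> {}" using vc_edge[OF cC] by blast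
      moreover have "Suc m \<notin> e" using i by auto
      ultimately show "e \<inter> (C - {Suc m}) \<noteq> {}" by blast
    qed
  qed
  have "\<not> is_vertex_cover m D" if D: "D \<subset> C - {Suc m}" for D
  proof
    assume "is_vertex_cover m D"
    then have "is_vertex_cover (Suc (Suc m)) (insert (Suc m) D)" by (rule L5)
    moreover have "insert (Suc m) D \<subset> C" using D assms(2) by blast
    ultimately show False using mvc_min[OF assms(1)] by blast
  qed
  then show ?thesis using cov unfolding is_min_vertex_cover_def by blast
qed

lemma L4:
  assumes "is_min_vertex_cover m D"
  shows "is_min_vertex_cover (Suc (Suc m)) (insert (Suc m) D)"
proof -
  have Dsub: "D \<subseteq> {1..m}" using vc_sub[OF mvc_cov[OF assms]] .
  have cov: "is_vertex_cover (Suc (Suc m)) (insert (Suc m) D)"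
    using L5[OF mvc_cov[OF assms]] .
  have "\<not> is_vertex_cover (Suc (Suc m)) E" if E: "E \<subset> insert (Suc m) D" for E
  proof
    assume Ec: "is_vertex_cover (Suc (Suc m)) E"
    have "{Suc m, Suc (Suc m)} \<in> path_edges (Suc (Suc m))" unfolding path_edges_iff by auto
    then have "{Suc m, Suc (Suc m)} \<inter> E \<noteq> {}" using vc_edge[OF Ec] by blast
    moreover have "Suc (Suc m) \<notin> insert (Suc m) D" using Dsub by auto
    then have "Suc (Suc m) \<notin> E" using E by blast
    ultimately have inE: "Suc m \<in> E" by blast
    have nD: "Suc m \<notin> D" using Dsub by auto
    have sub: "E - {Suc m} \<subset> D" using E inE nD by blast
    have "is_vertex_cover m (E - {Suc m})"
      unfolding is_vertex_cover_def
    proof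
      show "E - {Suc m} \<subseteq> {1..m}" using sub Dsub by blast
      show "\<forall>e\<in>path_edges m. e \<inter> (E - {Suc m}) \<noteq> {}"
      proof
        fix e assume e: "e \<in> path_edges m"
        then obtain i where i: "e = {i, Suc i}" "1 \<le> i" "Suc i \<le> m" unfolding path_edges_iff by blast
        then have "e \<in> path_edges (Suc (Suc m))" unfolding path_edges_iff by auto
        then have "e \<inter> E \<noteq> {}" using vc_edge[OF Ec] by blast
        moreover have "Suc m \<notin> e" using i by auto
        ultimately show "e \<inter> (E - {Suc m}) \<noteq> {}" by blast
      qed
    qed
    then show False using mvc_min[OF assms sub] by simp
  qed
  then show ?thesis using cov unfolding is_min_vertex_cover_def by blast
qed

lemma mon_insert: "k \<notin> D \<Longrightarrow> mon_of_set (insert k D) = (\<lambda>i. xpow k 1 i + mon_of_set D i)"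
  unfolding mon_of_set_def xpow_def by auto

theorem lemma3p8:
  fixes n :: nat and U :: monomial
  assumes "n \<ge> 4"
    and "\<forall>i. U i \<noteq> 0 \<longrightarrow> i \<in> {1..n}"
  shows "mmult (xpow (n - 1) 2) U \<in> min_gens (mideal_prod (cover_ideal n) (cover_ideal n))
     \<longleftrightarrow> U \<in> min_gens (mideal_prod (cover_ideal (n - 2)) (cover_ideal (n - 2)))"
proof -
  obtain m where n: "n = Suc (Suc m)" using assms(1) by (cases n; cases "n - 1"; auto)
  have n1: "n - 1 = Suc m" and n2: "n - 2 = m" using n by auto
  define V where "V = mmult (xpow (Suc m) 2) U"
  have Vi: "V i = (if i = Suc m then 2 else 0) + U i" for i
    unfolding V_def mmult_def xpow_def by simp
  have Dsub: "D \<subseteq> {1..m}" if "is_min_vertex_cover m D" for D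
    using vc_sub[OF mvc_cov[OF that]] .
  have lift: "mmult (xpow (Suc m) 2) q \<in> Pr (Suc (Suc m))" if qP: "q \<in> Pr m" for q
  proof -
    obtain D1 D2 where D: "is_min_vertex_cover m D1" "is_min_vertex_cover m D2"
      "q = mmult (mon_of_set D1) (mon_of_set D2)" using qP unfolding Pr_def by blast
    have "Suc m \<notin> D1" "Suc m \<notin> D2" using Dsub[OF D(1)] Dsub[OF D(2)] by auto
    then have eq: "mmult (xpow (Suc m) 2) q = mmult (mon_of_set (insert (Suc m) D1)) (mon_of_set (insert (Suc m) D2))"
      using D(3) by (simp add: mon_insert mmult_def xpow_def fun_eq_iff)
    have "is_min_vertex_cover (Suc (Suc m)) (insert (Suc m) D1)"
      "is_min_vertex_cover (Suc (Suc m)) (insert (Suc m) D2)" using L4 D by auto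
    then show ?thesis unfolding eq Pr_def by blast
  qed
  have lower: "\<exists>q\<in>Pr m. p = mmult (xpow (Suc m) 2) q \<and> q (Suc m) = 0"
    if pP: "p \<in> Pr (Suc (Suc m))" "p (Suc (Suc m)) = 0" for p
  proof -
    obtain C1 C2 where C: "is_min_vertex_cover (Suc (Suc m)) C1" "is_min_vertex_cover (Suc (Suc m)) C2"
      "p = mmult (mon_of_set C1) (mon_of_set C2)" using pP(1) unfolding Pr_def by blast
    have "Suc (Suc m) \<notin> C1" "Suc (Suc m) \<notin> C2" using pP(2) C(3)
      by (auto simp: mmult_def mon_of_set_def split: if_splits)
    then have in1: "Suc m \<in> C1" and in2: "Suc m \<in> C2" using L1 C by blast+
    define q where "q = mmult (mon_of_set (C1 - {Suc m})) (mon_of_set (C2 - {Suc m}))"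
    have "is_min_vertex_cover m (C1 - {Suc m})" "is_min_vertex_cover m (C2 - {Suc m})"
      using L3[OF C(1) in1] L3[OF C(2) in2] by auto
    then have "q \<in> Pr m" unfolding q_def Pr_def by blast
    moreover have "p = mmult (xpow (Suc m) 2) q" using C(3) in1 in2 unfolding q_def
      by (auto simp: mmult_def xpow_def mon_of_set_def fun_eq_iff)
    moreover have "q (Suc m) = 0" by (simp add: q_def mmult_def mon_of_set_def)
    ultimately show ?thesis by blast
  qed
  have "V \<in> {w \<in> Pr (Suc (Suc m)). \<forall>p\<in>Pr (Suc (Suc m)). mdvd p w \<longrightarrow> p = w}
        \<longleftrightarrow> U \<in> {w \<in> Pr m. \<forall>p\<in>Pr m. mdvd p w \<longrightarrow> p = w}"
  proof
    assume L: "V \<in> {w \<in> Pr (Suc (Suc m)). \<forall>p\<in>Pr (Suc (Suc m)). mdvd p w \<longrightarrow> p = w}"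
    then have LP: "V \<in> Pr (Suc (Suc m))" and Lm: "\<forall>p\<in>Pr (Suc (Suc m)). mdvd p V \<longrightarrow> p = V" by auto
    obtain C1 C2 where C: "is_min_vertex_cover (Suc (Suc m)) C1" "is_min_vertex_cover (Suc (Suc m)) C2"
      "V = mmult (mon_of_set C1) (mon_of_set C2)" using LP unfolding Pr_def by blast
    have a: "V (Suc m) = 2 + U (Suc m)" using Vi by simp
    have b: "V (Suc m) = mon_of_set C1 (Suc m) + mon_of_set C2 (Suc m)" using C(3) by (simp add: mmult_def)
    have U0: "U (Suc m) = 0" and in1: "Suc m \<in> C1" and in2: "Suc m \<in> C2"
      using a b by (auto simp: mon_of_set_def split: if_splits)
    have "V (Suc (Suc m)) = 0" using L2[OF C(1) in1] L2[OF C(2) in2] C(3) by (simp add: mmult_def mon_of_set_def)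
    then obtain q where q: "q \<in> Pr m" "V = mmult (xpow (Suc m) 2) q" "q (Suc m) = 0" using lower LP by blast
    have Uq: "U = q"
    proof
      fix i
      have "V i = (if i = Suc m then 2 else 0) + q i" using q(2) by (simp add: mmult_def xpow_def)
      then show "U i = q i" using Vi[of i] by simp
    qed
    have "\<forall>p\<in>Pr m. mdvd p U \<longrightarrow> p = U"
    proof (intro ballI impI)
      fix p assume p: "p \<in> Pr m" "mdvd p U"
      have "mmult (xpow (Suc m) 2) p \<in> Pr (Suc (Suc m))" using lift p(1) by blast
      moreover have "mdvd (mmult (xpow (Suc m) 2) p) V" using p(2) unfolding V_def mdvd_def mmult_def by simp
      ultimately have "mmult (xpow (Suc m) 2) p = V" using Lm by blast
      then show "p = U" unfolding V_def by (simp add: fun_eq_iff mmult_def)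
    qed
    then show "U \<in> {w \<in> Pr m. \<forall>p\<in>Pr m. mdvd p w \<longrightarrow> p = w}" using Uq q(1) by blast
  next
    assume R: "U \<in> {w \<in> Pr m. \<forall>p\<in>Pr m. mdvd p w \<longrightarrow> p = w}"
    then have RP: "U \<in> Pr m" and Rm: "\<forall>p\<in>Pr m. mdvd p U \<longrightarrow> p = U" by auto
    obtain D1 D2 where D: "is_min_vertex_cover m D1" "is_min_vertex_cover m D2"
      "U = mmult (mon_of_set D1) (mon_of_set D2)" using RP unfolding Pr_def by blast
    have "Suc (Suc m) \<notin> D1" "Suc (Suc m) \<notin> D2" using Dsub[OF D(1)] Dsub[OF D(2)] by auto
    then have Uzero: "U (Suc (Suc m)) = 0" using D(3)
      by (simp add: mmult_def mon_of_set_def)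
    have "V \<in> Pr (Suc (Suc m))" using lift RP unfolding V_def by blast
    moreover have "\<forall>p\<in>Pr (Suc (Suc m)). mdvd p V \<longrightarrow> p = V"
    proof (intro ballI impI)
      fix p assume p: "p \<in> Pr (Suc (Suc m))" "mdvd p V"
      have "p (Suc (Suc m)) \<le> V (Suc (Suc m))" using p(2) unfolding mdvd_def by blast
      then have "p (Suc (Suc m)) = 0" using Uzero Vi[of "Suc (Suc m)"] by simp
      then obtain q where q: "q \<in> Pr m" "p = mmult (xpow (Suc m) 2) q" "q (Suc m) = 0" using lower p(1) by blast
      have "mdvd q U" unfolding mdvd_def
      proof
        fix i
        have "p i \<le> V i" using p(2) unfolding mdvd_def by blast
        moreover have "p i = (if i = Suc m then 2 else 0) + q i" using q(2) by (simp add: mmult_def xpow_def)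
        ultimately show "q i \<le> U i" using Vi[of i] q(3) by (cases "i = Suc m") auto
      qed
      then have "q = U" using Rm q(1) by blast
      then show "p = V" using q(2) unfolding V_def by simp
    qed
    ultimately show "V \<in> {w \<in> Pr (Suc (Suc m)). \<forall>p\<in>Pr (Suc (Suc m)). mdvd p w \<longrightarrow> p = w}" by blast
  qed
  then show ?thesis unfolding min_gens_sq n1 n2 V_def n by simp
qed

end
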